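(* Fix $p\geq 3$ and put $\lambda=\lambda_p=2\cos(\pi/p)$. Let $[r_0;r_1,r_2,\dots]$ be an admissible $\lambda$-continued fraction. Then (i) if $m\geq 1$ and $r_m=r_{m+1}=\cdots=r_{m+j-1}=1$, then $j\leq p-3$; and (ii) if $r_0=r_1=\cdots=r_{j-1}=1$, then $j\leq p-2$.
   Context: Every finite real $\alpha$ is expanded by the "next integral multiple of $\lambda$" algorithm: $\alpha_0=\alpha$, and for $j\ge 0$, $r_j=\lfloor \alpha_j/\lambda\rfloor+1$ and $\alpha_{j+1}=\frac{1}{r_j\lambda-\alpha_j}$; the sequence $[r_0;r_1,\dots]$ is the $\lambda$-continued fraction of $\alpha$, where $[r_0;r_1,\dots,r_n]=r_0\lambda-\cfrac{1}{r_1\lambda-\cfrac{1}{\ddots-\cfrac{1}{r_n\lambda}}}$. A $\lambda$-continued fraction is admissible if it arises from some finite real number by this algorithm. *)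

theory Defs
  imports Complex_Main
begin

definition lambda_p :: "nat \<Rightarrow> real" where
  "lambda_p p = 2 * cos (pi / real p)"

fun lcf_alpha :: "real \<Rightarrow> real \<Rightarrow> nat \<Rightarrow> real" where
  "lcf_alpha l a 0 = a"
| "lcf_alpha l a (Suc n) =
     1 / (real_of_int (\<lfloor>lcf_alpha l a n / l\<rfloor> + 1) * l - lcf_alpha l a n)"

definition lcf_digit :: "real \<Rightarrow> real \<Rightarrow> nat \<Rightarrow> int" where
  "lcf_digit l a n = \<lfloor>lcf_alpha l a n / l\<rfloor> + 1"

definition lcf_admissible :: "real \<Rightarrow> (nat \<Rightarrow> int) \<Rightarrow> bool" where
  "lcf_admissible l r \<longleftrightarrow> (\<exists>a::real. \<forall>n. r n = lcf_digit l a n)"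

end

theory Submission
  imports Defs
begin

lemma lam_pos: assumes "p \<ge> 3" shows "lambda_p p > 0"
proof -
  have "pi / real p \<le> pi / 3" using assms
    by (intro divide_left_mono) (auto simp: pi_ge_zero)
  also have "... < pi/2" by simp
  finally have u: "pi / real p < pi/2" .
  have "0 \<le> pi / real p" by (simp add: pi_ge_zero)
  moreover have "- (pi/2) < 0" by simp
  ultimately have "- (pi/2) < pi / real p" by linarith
  hence "cos (pi / real p) > 0" using u by (rule cos_gt_zero_pi)
  thus ?thesis by (simp add: lambda_p_def)
qed

lemma alpha_lower: assumes "l > 0" shows "lcf_alpha l a (Suc n) \<ge> 1 / l"
proof -
  let ?b = "lcf_alpha l a n"
  have f1: "real_of_int \<lfloor>?b / l\<rfloor> \<le> ?b / l" by (rule of_int_floor_le)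
  have f2: "?b / l < real_of_int \<lfloor>?b / l\<rfloor> + 1" by (rule real_of_int_floor_add_one_gt)
  have "real_of_int \<lfloor>?b / l\<rfloor> * l \<le> ?b" using f1 assms by (simp add: le_divide_eq)
  moreover have "?b < (real_of_int \<lfloor>?b / l\<rfloor> + 1) * l" using f2 pos_divide_less_eq[OF assms] by blast
  ultimately have d: "0 < (real_of_int \<lfloor>?b / l\<rfloor> + 1) * l - ?b"
     "(real_of_int \<lfloor>?b / l\<rfloor> + 1) * l - ?b \<le> l" by (auto simp: algebra_simps)
  have "1 / l \<le> 1 / ((real_of_int \<lfloor>?b / l\<rfloor> + 1) * l - ?b)"
    using d by (intro divide_left_mono) auto
  thus ?thesis by simp
qed

lemma digit_one:
  assumes "l > 0" "lcf_digit l a n = 1"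
  shows "lcf_alpha l a n < l" "lcf_alpha l a (Suc n) = 1 / (l - lcf_alpha l a n)"
proof -
  have "\<lfloor>lcf_alpha l a n / l\<rfloor> = 0" using assms by (simp add: lcf_digit_def)
  hence "lcf_alpha l a n / l < 1" by linarith
  thus "lcf_alpha l a n < l" using assms by (simp add: divide_less_eq)
  show "lcf_alpha l a (Suc n) = 1 / (l - lcf_alpha l a n)"
    using \<open>\<lfloor>lcf_alpha l a n / l\<rfloor> = 0\<close> by simp
qed

definition xk :: "nat \<Rightarrow> nat \<Rightarrow> real" where
  "xk p k = sin (real k * pi / real p) / sin (real (Suc k) * pi / real p)"

lemma sin_pos_k: assumes "0 < k" "k < p" shows "sin (real k * pi / real p) > 0"
proof -
  have "real k * pi / real p < pi"
    using assms by (simp add: divide_less_eq)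
  moreover have "0 < real k * pi / real p" using assms by simp
  ultimately show ?thesis by (intro sin_gt_zero) auto
qed

lemma xk_step:
  assumes "Suc k < p"
  shows "xk p (Suc k) = 1 / (lambda_p p - xk p k)"
proof -
  define t where "t = pi / real p"
  have s1: "sin (real (Suc k) * t) > 0" using sin_pos_k[of "Suc k" p] assms
    by (simp add: t_def)
  have id: "2 * cos t * sin (real (Suc k) * t) - sin (real k * t) = sin (real (Suc (Suc k)) * t)"
  proof -
    have "sin (real (Suc (Suc k)) * t) = sin (real (Suc k) * t + t)" by (simp add: algebra_simps)
    also have "... = sin (real (Suc k) * t) * cos t + cos (real (Suc k) * t) * sin t" by (rule sin_add)
    finally have A: "sin (real (Suc (Suc k)) * t) = sin (real (Suc k) * t) * cos t + cos (real (Suc k) * t) * sin t" .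
    have "sin (real k * t) = sin (real (Suc k) * t - t)" by (simp add: algebra_simps)
    also have "... = sin (real (Suc k) * t) * cos t - cos (real (Suc k) * t) * sin t" by (rule sin_diff)
    finally have B: "sin (real k * t) = sin (real (Suc k) * t) * cos t - cos (real (Suc k) * t) * sin t" .
    show ?thesis using A B by (simp add: algebra_simps)
  qed
  have "lambda_p p - xk p k = sin (real (Suc (Suc k)) * t) / sin (real (Suc k) * t)"
    using s1 id unfolding lambda_p_def xk_def t_def
    by (simp add: field_simps)
  thus ?thesis unfolding xk_def t_def by (simp add: mult.commute)
qed

lemma xk_last: assumes "p \<ge> 3" shows "xk p (p - 2) = lambda_p p"
proof -
  define t where "t = pi / real p"
  have pt: "real p * t = pi" using assms by (simp add: t_def)
  have "real (p - 2) * t = pi - 2 * t" using assms pt by (simp add: of_nat_diff algebra_simps)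
  moreover have "real (Suc (p - 2)) * t = pi - t" using assms pt by (simp add: of_nat_diff algebra_simps)
  moreover have "sin t > 0" using sin_pos_k[of 1 p] assms by (simp add: t_def)
  ultimately show ?thesis unfolding xk_def lambda_p_def
    by (simp only: times_divide_eq_right[symmetric] t_def[symmetric]) (simp add: sin_double)
qed

lemma xk_one: "xk p 0 = 0" by (simp add: xk_def)

lemma xk_1: assumes "p \<ge> 3" shows "xk p 1 = 1 / lambda_p p"
  using xk_step[of 0 p] assms by (simp add: xk_one)

lemma chain:
  assumes p: "p \<ge> 3" and l: "l = lambda_p p"
    and start: "lcf_alpha l a n \<ge> xk p k" and k: "k \<le> p - 2"
    and ones: "\<forall>i < p - 2 - k. lcf_digit l a (n + i) = 1"
  shows "\<forall>i \<le> p - 2 - k. lcf_alpha l a (n + i) \<ge> xk p (k + i)"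
proof (intro allI impI)
  fix i assume "i \<le> p - 2 - k"
  thus "lcf_alpha l a (n + i) \<ge> xk p (k + i)"
  proof (induction i)
    case 0 thus ?case using start by simp
  next
    case (Suc i)
    have lp: "l > 0" using lam_pos[OF p] l by simp
    have d1: "lcf_digit l a (n + i) = 1" using ones Suc.prems by auto
    have IH: "lcf_alpha l a (n + i) \<ge> xk p (k + i)" using Suc by auto
    note D = digit_one[OF lp d1]
    have "xk p (Suc (k + i)) = 1 / (l - xk p (k + i))"
      using xk_step[of "k+i" p] Suc.prems l k p by auto
    also have "... \<le> 1 / (l - lcf_alpha l a (n + i))"
      using IH D(1) by (intro divide_left_mono) (auto simp: mult_pos_pos)
    also have "... = lcf_alpha l a (Suc (n + i))" using D(2) by simp
    finally show ?case by simp
  qed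
qed

theorem lemma2p3:
  fixes p :: nat and r :: "nat \<Rightarrow> int"
  assumes "p \<ge> 3"
    and "lcf_admissible (lambda_p p) r"
  shows "(\<forall>m j. m \<ge> 1 \<longrightarrow> (\<forall>i<j. r (m + i) = 1) \<longrightarrow> j \<le> p - 3)
       \<and> (\<forall>j. (\<forall>i<j. r i = 1) \<longrightarrow> j \<le> p - 2)"
proof -
  define l where "l = lambda_p p"
  have lp: "l > 0" using lam_pos[OF assms(1)] l_def by simp
  obtain a where ra: "\<forall>n. r n = lcf_digit l a n" using assms(2) l_def lcf_admissible_def by auto
  show ?thesis
  proof (intro conjI allI impI; rule ccontr)
    fix m j assume m: "m \<ge> 1" and ones: "\<forall>i<j. r (m + i) = 1" and nj: "\<not> j \<le> p - 3"
    obtain m' where m': "m = Suc m'" using m by (cases m) auto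
    have st: "lcf_alpha l a m \<ge> xk p 1"
      using alpha_lower[OF lp, of a m'] xk_1[OF assms(1)] m' l_def by simp
    have "\<forall>i \<le> p - 2 - 1. lcf_alpha l a (m + i) \<ge> xk p (1 + i)"
      by (rule chain[OF assms(1) l_def st]) (use assms(1) ones nj ra in auto)
    moreover have "p - 3 \<le> p - 2 - 1" "1 + (p - 3) = p - 2" using assms(1) by auto
    ultimately have "lcf_alpha l a (m + (p - 3)) \<ge> xk p (p - 2)"
      by metis
    moreover have "lcf_digit l a (m + (p - 3)) = 1" using ones nj ra by auto
    ultimately show False using digit_one(1)[OF lp] xk_last[OF assms(1)] l_def by fastforce
  next
    fix j assume ones: "\<forall>i<j. r i = 1" and nj: "\<not> j \<le> p - 2"
    have "r 0 = 1" using ones nj by auto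
    hence "\<lfloor>a / l\<rfloor> = 0" using ra by (simp add: lcf_digit_def)
    hence "a / l \<ge> 0" by linarith
    hence "lcf_alpha l a 0 \<ge> 0" using lp by (simp add: zero_le_divide_iff)
    hence st: "lcf_alpha l a 0 \<ge> xk p 0" by (simp add: xk_one)
    have "\<forall>i \<le> p - 2 - 0. lcf_alpha l a (0 + i) \<ge> xk p (0 + i)"
      by (rule chain[OF assms(1) l_def st]) (use assms(1) ones nj ra in auto)
    hence "lcf_alpha l a (p - 2) \<ge> xk p (p - 2)" by simp
    moreover have "lcf_digit l a (p - 2) = 1" using ones nj ra by auto
    ultimately show False using digit_one(1)[OF lp] xk_last[OF assms(1)] l_def by fastforce
  qed
qed

end
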